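(* Let $A,B$ be finite nonempty subsets of an abelian group $\mathbf G$ and let $k\ge1$ be an integer. Suppose $|A-A|\le K|A|$ and $\mathsf E_{2k+2}(A)=M|A|^{2k+3}/K^{2k+1}$ for some $K,M>0$. Then there exist a set $T\subseteq A-A$ with $|T|\ge K|A|/(16M)$ and an element $u\in\mathbf G$ such that for every $t\in T+u$, $$\sum_{x\in\mathbf G}\big|(A*B)(x)-(A*B)(x+t)\big|^2\le 32|A|^2|B|/k.$$
   Context: Sets are identified with their indicator functions; $(A*B)(x)=\sum_{y}A(y)B(x-y)$. $(A\circ A)(x)=|\{(a,b)\in A^2:b-a=x\}|$ and $\mathsf E_j(A)=\sum_x(A\circ A)(x)^j$. *)

theory Defs
  imports "HOL-Analysis.Analysis"
begin

text \<open>Sets are identified with indicator functions.  Convolution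
  (A*B)(x) = sum over y of A(y) B(x-y) = number of y in A with x - y in B.\<close>
definition conv :: "'a::ab_group_add set \<Rightarrow> 'a set \<Rightarrow> 'a \<Rightarrow> real" where
  "conv A B x = real (card {y \<in> A. x - y \<in> B})"

definition corr :: "'a::ab_group_add set \<Rightarrow> 'a \<Rightarrow> real" where
  "corr A x = real (card {(a, b) \<in> A \<times> A. b - a = x})"

definition energy :: "nat \<Rightarrow> 'a::ab_group_add set \<Rightarrow> real" where
  "energy j A = (\<Sum>\<^sub>\<infinity> x. corr A x ^ j)"

definition diffset :: "'a::ab_group_add set \<Rightarrow> 'a set \<Rightarrow> 'a set" where
  "diffset A B = {a - b | a b. a \<in> A \<and> b \<in> B}"

end

theory Submission
  imports Defs
begin

definition Ls :: "'a set \<Rightarrow> nat \<Rightarrow> 'a list set" where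
  "Ls A m = {xs. set xs \<subseteq> A \<and> length xs = m}"

lemma finite_Ls: "finite A \<Longrightarrow> finite (Ls A m)"
  unfolding Ls_def by (rule finite_lists_length_eq)

lemma card_Ls: "finite A \<Longrightarrow> card (Ls A m) = card A ^ m"
  unfolding Ls_def by (rule card_lists_length_eq)

lemma sum_Ls_Suc:
  assumes "finite A"
  shows "(\<Sum>a\<in>Ls A (Suc m). F a) = (\<Sum>y\<in>A. \<Sum>a\<in>Ls A m. F (y#a))"
proof -
  have "Ls A (Suc m) = (\<lambda>(xs, n). n#xs) ` (Ls A m \<times> A)"
    unfolding Ls_def by (rule lists_length_Suc_eq)
  moreover have "inj_on (\<lambda>(xs, n). n#xs) (Ls A m \<times> A)"
    by (auto simp: inj_on_def)
  ultimately have "(\<Sum>a\<in>Ls A (Suc m). F a) = (\<Sum>p\<in>Ls A m \<times> A. F ((\<lambda>(xs, n). n#xs) p))"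
    by (simp add: sum.reindex)
  also have "\<dots> = (\<Sum>a\<in>Ls A m. \<Sum>y\<in>A. F (y#a))"
    by (simp add: sum.cartesian_product split_def)
  also have "\<dots> = (\<Sum>y\<in>A. \<Sum>a\<in>Ls A m. F (y#a))"
    by (rule sum.swap)
  finally show ?thesis .
qed

lemma var1:
  fixes h :: "'a \<Rightarrow> real"
  assumes "finite A" "(\<Sum>y\<in>A. h y) = 0"
  shows "(\<Sum>a\<in>Ls A m. sum_list (map h a)) = 0"
proof (induction m)
  case 0
  then show ?case by (simp add: Ls_def)
next
  case (Suc m)
  have "(\<Sum>a\<in>Ls A (Suc m). sum_list (map h a)) = (\<Sum>y\<in>A. \<Sum>a\<in>Ls A m. h y + sum_list (map h a))"
    using assms(1) by (simp add: sum_Ls_Suc)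
  also have "\<dots> = (\<Sum>y\<in>A. card (Ls A m) * h y)"
    using Suc by (simp add: sum.distrib)
  also have "\<dots> = 0" using assms(2) by (simp add: sum_distrib_left[symmetric])
  finally show ?case .
qed

lemma var2:
  fixes h :: "'a \<Rightarrow> real"
  assumes "finite A" "(\<Sum>y\<in>A. h y) = 0"
  shows "(\<Sum>a\<in>Ls A m. (sum_list (map h a))^2) = real m * real (card A)^(m-1) * (\<Sum>y\<in>A. (h y)^2)"
proof (induction m)
  case 0
  then show ?case by (simp add: Ls_def)
next
  case (Suc m)
  let ?n = "real (card A)"
  let ?S = "\<lambda>a. sum_list (map h a)"
  have "(\<Sum>a\<in>Ls A (Suc m). (?S a)^2) = (\<Sum>y\<in>A. \<Sum>a\<in>Ls A m. (h y + ?S a)^2)"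
    using assms(1) by (simp add: sum_Ls_Suc)
  also have "\<dots> = (\<Sum>y\<in>A. \<Sum>a\<in>Ls A m. ((h y)^2 + 2 * h y * ?S a + (?S a)^2))"
    by (simp add: power2_eq_square algebra_simps)
  also have "\<dots> = (\<Sum>y\<in>A. ?n^m * (h y)^2 + 2 * h y * (\<Sum>a\<in>Ls A m. ?S a) + (\<Sum>a\<in>Ls A m. (?S a)^2))"
    using assms(1) by (simp add: sum.distrib sum_distrib_left card_Ls)
  also have "\<dots> = (\<Sum>y\<in>A. ?n^m * (h y)^2 + real m * ?n^(m-1) * (\<Sum>y\<in>A. (h y)^2))"
    using Suc var1[OF assms] by simp
  also have "\<dots> = ?n^m * (\<Sum>y\<in>A. (h y)^2) + ?n * (real m * ?n^(m-1)) * (\<Sum>y\<in>A. (h y)^2)"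
    by (simp add: sum.distrib sum_distrib_left mult.assoc)
  also have "\<dots> = real (Suc m) * ?n^(Suc m - 1) * (\<Sum>y\<in>A. (h y)^2)"
  proof (cases m)
    case 0 then show ?thesis by simp
  next
    case (Suc j) then show ?thesis by (simp add: algebra_simps)
  qed
  finally show ?case .
qed

definition Bi :: "'a set \<Rightarrow> 'a \<Rightarrow> real" where
  "Bi B x = (if x \<in> B then 1 else 0)"

definition gg :: "'a::ab_group_add set \<Rightarrow> 'a list \<Rightarrow> 'a \<Rightarrow> real" where
  "gg B a x = sum_list (map (\<lambda>y. Bi B (x - y)) a)"

definition UU :: "'a::ab_group_add set \<Rightarrow> 'a set \<Rightarrow> 'a set" where
  "UU A B = (\<lambda>(y, b). y + b) ` (A \<times> B)"

definition err :: "'a::ab_group_add set \<Rightarrow> 'a set \<Rightarrow> 'a list \<Rightarrow> real" where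
  "err A B a = (\<Sum>x\<in>UU A B. (real (card A) * gg B a x - real (length a) * conv A B x)^2)"

lemma finite_UU: "finite A \<Longrightarrow> finite B \<Longrightarrow> finite (UU A B)"
  unfolding UU_def by simp

lemma conv_sum: "finite A \<Longrightarrow> conv A B x = (\<Sum>y\<in>A. Bi B (x - y))"
  unfolding conv_def Bi_def by (simp add: sum.inter_filter[symmetric])

lemma err_nonneg: "err A B a \<ge> 0"
  unfolding err_def by (simp add: sum_nonneg)

lemma gg_minus:
  "real n * gg B a x - real (length a) * c = sum_list (map (\<lambda>y. real n * Bi B (x - y) - c) a)"
  unfolding gg_def by (induction a) (auto simp: algebra_simps)

lemma sum_h_zero:
  assumes "finite A"
  shows "(\<Sum>y\<in>A. real (card A) * Bi B (x - y) - conv A B x) = 0"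
  using assms by (simp add: sum_subtractf conv_sum sum_distrib_left[symmetric])

lemma sum_h_sq:
  assumes "finite A"
  shows "(\<Sum>y\<in>A. (real (card A) * Bi B (x - y) - conv A B x)^2) \<le> real (card A)^2 * conv A B x"
proof -
  have bi2: "\<And>y. (Bi B y)^2 = Bi B y" by (simp add: Bi_def)
  have "(\<Sum>y\<in>A. (real (card A) * Bi B (x - y) - conv A B x)^2)
      = (\<Sum>y\<in>A. real (card A)^2 * Bi B (x - y) - 2 * real (card A) * conv A B x * Bi B (x - y) + (conv A B x)^2)"
    by (rule sum.cong) (auto simp: power2_eq_square algebra_simps bi2[unfolded power2_eq_square])
  also have "\<dots> = real (card A)^2 * conv A B x - real (card A) * (conv A B x)^2"
    using assms by (simp add: sum.distrib sum_subtractf sum_distrib_left[symmetric] conv_sum power2_eq_square)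
  also have "\<dots> \<le> real (card A)^2 * conv A B x" by simp
  finally show ?thesis .
qed

lemma conv_zero:
  assumes "x \<notin> UU A B" shows "conv A B x = 0"
proof -
  have "{y\<in>A. x - y \<in> B} = {}"
  proof (rule ccontr)
    assume "{y\<in>A. x - y \<in> B} \<noteq> {}"
    then obtain y where "y \<in> A" "x - y \<in> B" by auto
    hence "y + (x - y) \<in> UU A B" unfolding UU_def by (auto intro!: image_eqI[where x="(y, x-y)"])
    thus False using assms by simp
  qed
  thus ?thesis unfolding conv_def by (metis card.empty of_nat_0)
qed

lemma sum_conv_le:
  assumes "finite A" "finite B"
  shows "(\<Sum>x\<in>UU A B. conv A B x) \<le> real (card A) * real (card B)"
proof -
  have "(\<Sum>x\<in>UU A B. conv A B x) = (\<Sum>y\<in>A. \<Sum>x\<in>UU A B. Bi B (x - y))"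
    using assms by (simp add: conv_sum sum.swap[of _ A])
  also have "\<dots> \<le> (\<Sum>y\<in>A. real (card B))"
  proof (rule sum_mono)
    fix y assume "y \<in> A"
    have "(\<Sum>x\<in>UU A B. Bi B (x - y)) = real (card {x\<in>UU A B. x - y \<in> B})"
      unfolding Bi_def using finite_UU[OF assms] by (simp add: sum.inter_filter[symmetric])
    also have "card {x\<in>UU A B. x - y \<in> B} \<le> card B"
      by (rule card_inj_on_le[where f="\<lambda>x. x - y"]) (auto simp: inj_on_def assms)
    finally show "(\<Sum>x\<in>UU A B. Bi B (x - y)) \<le> real (card B)" by simp
  qed
  finally show ?thesis by simp
qed

lemma sum_err:
  assumes "finite A" "finite B"
  shows "(\<Sum>a\<in>Ls A (Suc j). err A B a) \<le> real (Suc j) * real (card A)^(j+3) * real (card B)"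
proof -
  let ?n = "real (card A)"
  have len: "\<And>a. a \<in> Ls A (Suc j) \<Longrightarrow> length a = Suc j" by (simp add: Ls_def)
  have "(\<Sum>a\<in>Ls A (Suc j). err A B a) = (\<Sum>x\<in>UU A B. \<Sum>a\<in>Ls A (Suc j).
          (sum_list (map (\<lambda>y. ?n * Bi B (x - y) - conv A B x) a))^2)"
    unfolding err_def
    by (subst sum.swap) (intro sum.cong refl, simp add: gg_minus[symmetric] len)
  also have "\<dots> = (\<Sum>x\<in>UU A B. real (Suc j) * ?n^j * (\<Sum>y\<in>A. (?n * Bi B (x - y) - conv A B x)^2))"
    by (intro sum.cong refl, subst var2[OF assms(1) sum_h_zero[OF assms(1)]]) simp
  also have "\<dots> \<le> (\<Sum>x\<in>UU A B. real (Suc j) * ?n^j * (?n^2 * conv A B x))"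
    by (intro sum_mono mult_left_mono sum_h_sq assms) auto
  also have "\<dots> = real (Suc j) * ?n^j * ?n^2 * (\<Sum>x\<in>UU A B. conv A B x)"
    by (simp add: sum_distrib_left mult.assoc)
  also have "\<dots> \<le> real (Suc j) * ?n^j * ?n^2 * (?n * real (card B))"
    by (intro mult_left_mono sum_conv_le assms) auto
  also have "\<dots> = real (Suc j) * ?n^(j+3) * real (card B)"
    by (simp add: power_add power2_eq_square power3_eq_cube algebra_simps)
  finally show ?thesis .
qed

lemma markov:
  assumes "finite A" "finite B" "A \<noteq> {}" "B \<noteq> {}"
  shows "real (card {a\<in>Ls A (Suc j). err A B a \<le> 2 * real (Suc j) * real (card A)^2 * real (card B)})
           \<ge> real (card A)^(Suc j) / 2"
proof -
  let ?n = "real (card A)"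
  define c where "c = 2 * real (Suc j) * ?n^2 * real (card B)"
  define G where "G = {a\<in>Ls A (Suc j). err A B a \<le> c}"
  define Bad where "Bad = {a\<in>Ls A (Suc j). \<not> err A B a \<le> c}"
  have cpos: "c > 0" unfolding c_def using assms by (simp add: card_gt_0_iff)
  have fin: "finite (Ls A (Suc j))" using assms by (simp add: finite_Ls)
  have "real (card Bad) * c = (\<Sum>a\<in>Bad. c)" by simp
  also have "\<dots> \<le> (\<Sum>a\<in>Bad. err A B a)"
    by (rule sum_mono) (auto simp: Bad_def)
  also have "\<dots> \<le> (\<Sum>a\<in>Ls A (Suc j). err A B a)"
    by (rule sum_mono2[OF fin]) (auto simp: Bad_def err_nonneg)
  also have "\<dots> \<le> real (Suc j) * ?n^(j+3) * real (card B)"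
    by (rule sum_err[OF assms(1,2)])
  also have "\<dots> = c * (?n^(Suc j) / 2)"
    by (simp add: c_def power_add power2_eq_square power3_eq_cube algebra_simps)
  finally have "real (card Bad) \<le> ?n^(Suc j) / 2"
    using cpos by (simp add: mult.commute)
  moreover have "card G + card Bad = card (Ls A (Suc j))"
  proof -
    have "Ls A (Suc j) = G \<union> Bad" "G \<inter> Bad = {}" by (auto simp: G_def Bad_def)
    moreover have "finite G" "finite Bad" using fin by (auto simp: G_def Bad_def)
    ultimately show ?thesis by (simp add: card_Un_disjoint)
  qed
  moreover have "card (Ls A (Suc j)) = card A ^ Suc j" using assms by (simp add: card_Ls)
  ultimately have "real (card G + card Bad) = real (card A ^ Suc j)" "real (card Bad) \<le> ?n^(Suc j) / 2"
    by simp_all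
  hence "real (card G) \<ge> ?n^(Suc j) / 2" by simp
  thus ?thesis unfolding G_def c_def .
qed

lemma gg_zero:
  assumes "set a \<subseteq> A" "x \<notin> UU A B" shows "gg B a x = 0"
proof -
  have "\<And>y. y \<in> set a \<Longrightarrow> Bi B (x - y) = 0"
  proof -
    fix y assume y: "y \<in> set a"
    show "Bi B (x - y) = 0"
    proof (rule ccontr)
      assume "Bi B (x - y) \<noteq> 0"
      hence "x - y \<in> B" by (simp add: Bi_def split: if_splits)
      hence "y + (x - y) \<in> UU A B" using y assms(1) unfolding UU_def
        by (auto intro!: image_eqI[where x="(y, x-y)"])
      thus False using assms(2) by simp
    qed
  qed
  thus ?thesis unfolding gg_def by (induction a) auto
qed

lemma gg_shift: "gg B (map (\<lambda>y. y + t) a) (x + t) = gg B a x"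
  unfolding gg_def by (simp add: o_def)

lemma period:
  fixes A B :: "'a::ab_group_add set"
  assumes fin: "finite A" "finite B"
    and a: "set a \<subseteq> A" and a': "set (map (\<lambda>y. y + t) a) \<subseteq> A"
    and e1: "err A B a \<le> c" and e2: "err A B (map (\<lambda>y. y + t) a) \<le> c"
    and m: "length a = m" "m > 0"
  shows "(\<Sum>\<^sub>\<infinity> x. \<bar>conv A B x - conv A B (x + t)\<bar> ^ 2) \<le> 4 * c / (real m)^2"
proof -
  let ?n = "real (card A)"
  let ?a' = "map (\<lambda>y. y + t) a"
  let ?f = "conv A B"
  define p where "p x = ?n * gg B a x - real m * ?f x" for x
  define q where "q x = ?n * gg B ?a' x - real m * ?f x" for x
  define F where "F x = \<bar>?f x - ?f (x + t)\<bar> ^ 2" for x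
  define W where "W = UU A B \<union> (\<lambda>x. x - t) ` UU A B"
  have finW: "finite W" unfolding W_def using fin by (simp add: finite_UU)
  have FW: "F x = 0" if "x \<notin> W" for x
  proof -
    have "x \<notin> UU A B" using that by (simp add: W_def)
    moreover have "x + t \<notin> UU A B"
      using that unfolding W_def by (auto intro!: image_eqI[where x="x+t"])
    ultimately show ?thesis by (simp add: F_def conv_zero)
  qed
  have "(\<Sum>\<^sub>\<infinity> x. F x) = infsum F W"
    by (rule infsum_cong_neutral) (use FW in auto)
  also have "\<dots> = sum F W" using finW by simp
  finally have inf: "(\<Sum>\<^sub>\<infinity> x. F x) = sum F W" .
  have pt: "real m * (?f x - ?f (x + t)) = - p x + q (x + t)" for x
    unfolding p_def q_def gg_shift by (simp add: algebra_simps)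
  have Fb: "(real m)^2 * F x \<le> 2 * (p x)^2 + 2 * (q (x + t))^2" for x
  proof -
    have "(real m)^2 * F x = (real m * (?f x - ?f (x + t)))^2"
      unfolding F_def by (simp add: power_mult_distrib)
    also have "\<dots> = (- p x + q (x + t))^2" by (simp only: pt)
    also have "\<dots> \<le> 2 * (p x)^2 + 2 * (q (x + t))^2"
    proof -
      have "2 * (p x)^2 + 2 * (q (x + t))^2 - (- p x + q (x + t))^2 = (p x + q (x + t))^2"
        by (simp add: power2_eq_square algebra_simps)
      moreover have "(p x + q (x + t))^2 \<ge> 0" by simp
      ultimately show ?thesis by linarith
    qed
    finally show ?thesis .
  qed
  have p0: "p x = 0" if "x \<notin> UU A B" for x
    using that a by (simp add: p_def gg_zero conv_zero)
  have q0: "q x = 0" if "x \<notin> UU A B" for x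
    using that a' by (simp add: q_def gg_zero conv_zero)
  have sp: "(\<Sum>x\<in>W. (p x)^2) = err A B a"
  proof -
    have "(\<Sum>x\<in>W. (p x)^2) = (\<Sum>x\<in>UU A B. (p x)^2)"
      by (rule sum.mono_neutral_right[OF finW]) (auto simp: W_def p0)
    thus ?thesis unfolding err_def p_def using m by simp
  qed
  have sq: "(\<Sum>x\<in>W. (q (x + t))^2) = err A B ?a'"
  proof -
    have inj: "inj_on (\<lambda>x. x + t) W" by (auto simp: inj_on_def)
    have "(\<Sum>x\<in>W. (q (x + t))^2) = (\<Sum>x\<in>(\<lambda>x. x + t) ` W. (q x)^2)"
      by (simp add: sum.reindex[OF inj] o_def)
    also have "\<dots> = (\<Sum>x\<in>UU A B. (q x)^2)"
    proof (rule sum.mono_neutral_right)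
      show "finite ((\<lambda>x. x + t) ` W)" using finW by simp
      show "UU A B \<subseteq> (\<lambda>x. x + t) ` W"
      proof
        fix x assume "x \<in> UU A B"
        hence "x - t \<in> W" unfolding W_def by blast
        moreover have "x = (x - t) + t" by simp
        ultimately show "x \<in> (\<lambda>x. x + t) ` W" by blast
      qed
      show "\<forall>i\<in>(\<lambda>x. x + t) ` W - UU A B. (q i)\<^sup>2 = 0" by (auto simp: q0)
    qed
    finally show ?thesis unfolding err_def q_def using m by simp
  qed
  have "(real m)^2 * sum F W \<le> (\<Sum>x\<in>W. 2 * (p x)^2 + 2 * (q (x + t))^2)"
    unfolding sum_distrib_left by (rule sum_mono) (rule Fb)
  also have "\<dots> = 2 * err A B a + 2 * err A B ?a'"
    by (simp add: sum.distrib sum_distrib_left[symmetric] sp sq)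
  also have "\<dots> \<le> 4 * c" using e1 e2 by simp
  finally have "(real m)^2 * sum F W \<le> 4 * c" .
  hence "sum F W \<le> 4 * c / (real m)^2" using m by (simp add: field_simps)
  thus ?thesis using inf unfolding F_def by simp
qed

definition sh :: "'a::ab_group_add list \<Rightarrow> 'a list" where
  "sh a = map (\<lambda>y. y - hd a) a"

lemma sh_shift: "a \<noteq> [] \<Longrightarrow> sh (map (\<lambda>y. y + t) a) = sh a"
  unfolding sh_def by (cases a) (auto simp: algebra_simps)

lemma sh_eq_shift:
  assumes "sh a = sh b" "length a = length b" "a \<noteq> []"
  shows "b = map (\<lambda>y. y + (hd b - hd a)) a"
proof (rule nth_equalityI)
  show "length b = length (map (\<lambda>y. y + (hd b - hd a)) a)" using assms by simp
  fix i assume "i < length b"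
  hence "(sh a) ! i = (sh b) ! i" using assms by simp
  hence "a ! i - hd a = b ! i - hd b" using \<open>i < length b\<close> assms(2) by (simp add: sh_def)
  thus "b ! i = map (\<lambda>y. y + (hd b - hd a)) a ! i"
    using \<open>i < length b\<close> assms(2) by (simp add: algebra_simps eq_diff_eq)
qed

lemma fiber_cs:
  assumes "finite G"
  shows "(real (card G))^2 \<le> real (card (\<sigma> ` G)) * real (card {(a,b)\<in>G\<times>G. \<sigma> a = \<sigma> b})"
proof -
  define c where "c s = real (card {a\<in>G. \<sigma> a = s})" for s
  have "real (card G) = (\<Sum>a\<in>G. 1)" by simp
  also have "\<dots> = (\<Sum>s\<in>\<sigma> ` G. \<Sum>a\<in>{x\<in>G. \<sigma> x = s}. 1)"
    by (rule sum.image_gen[OF assms])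
  also have "\<dots> = (\<Sum>s\<in>\<sigma> ` G. c s)" by (simp add: c_def)
  finally have g: "real (card G) = (\<Sum>s\<in>\<sigma> ` G. c s)" .
  have "{(a,b)\<in>G\<times>G. \<sigma> a = \<sigma> b} = Sigma G (\<lambda>a. {b\<in>G. \<sigma> b = \<sigma> a})" by auto
  hence "real (card {(a,b)\<in>G\<times>G. \<sigma> a = \<sigma> b}) = (\<Sum>a\<in>G. c (\<sigma> a))"
    using assms by (simp add: card_SigmaI c_def)
  also have "\<dots> = (\<Sum>s\<in>\<sigma> ` G. \<Sum>a\<in>{x\<in>G. \<sigma> x = s}. c (\<sigma> a))"
    by (rule sum.image_gen[OF assms])
  also have "\<dots> = (\<Sum>s\<in>\<sigma> ` G. (c s)^2)"
    by (intro sum.cong refl) (simp add: c_def power2_eq_square)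
  finally have p: "real (card {(a,b)\<in>G\<times>G. \<sigma> a = \<sigma> b}) = (\<Sum>s\<in>\<sigma> ` G. (c s)^2)" .
  show ?thesis unfolding g p
    using sum_squared_le_sum_of_squares[of c "\<sigma> ` G"] by (simp add: mult.commute)
qed

lemma finite_diffset: "finite A \<Longrightarrow> finite (diffset A A)"
proof -
  assume "finite A"
  moreover have "diffset A A = (\<lambda>(a, b). a - b) ` (A \<times> A)" unfolding diffset_def by auto
  ultimately show ?thesis by simp
qed

lemma corr_eq: "corr A t = real (card {y\<in>A. y + t \<in> A})"
proof -
  have "bij_betw (\<lambda>y. (y, y + t)) {y\<in>A. y + t \<in> A} {(a, b) \<in> A \<times> A. b - a = t}"
    by (rule bij_betwI[where g=fst]) (auto simp: algebra_simps)
  thus ?thesis unfolding corr_def by (simp add: bij_betw_same_card)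
qed

lemma corr_zero: "t \<notin> diffset A A \<Longrightarrow> corr A t = 0"
  unfolding corr_eq diffset_def
  by (simp add: card_eq_0_iff) (metis add_diff_cancel_left')

lemma energy_sum:
  assumes "finite A" and that: "j > 0"
  shows "energy j A = (\<Sum>x\<in>diffset A A. corr A x ^ j)"
proof -
  have "energy j A = infsum (\<lambda>x. corr A x ^ j) (diffset A A)"
    unfolding energy_def by (rule infsum_cong_neutral) (use that in \<open>auto simp: corr_zero\<close>)
  thus ?thesis using finite_diffset[OF assms(1)] by simp
qed

lemma arith_id:
  fixes n K M :: real
  shows "n > 0 \<Longrightarrow> K > 0 \<Longrightarrow> M > 0 \<Longrightarrow> (n^(k+2)/(4*K^k))^2 = (K*n/(16*M)) * (M*n^(2*k+3)/K^(2*k+1)) \<and> n^(k+2)/(4*K^k) * (K*n)^k = (n^(Suc k)/2)^2"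
  by (simp add: field_simps power_mult_distrib power_add mult_2 power2_eq_square power_mult power3_eq_cube)

theorem theorem20:
  fixes A B :: "'a::ab_group_add set" and k :: nat and K M :: real
  assumes "finite A" "A \<noteq> {}" "finite B" "B \<noteq> {}"
    and "k \<ge> 1" and "K > 0" and "M > 0"
    and "real (card (diffset A A)) \<le> K * real (card A)"
    and "energy (2*k+2) A = M * real (card A) ^ (2*k+3) / K ^ (2*k+1)"
  shows "\<exists>T u. T \<subseteq> diffset A A \<and> real (card T) \<ge> K * real (card A) / (16 * M) \<and>
           (\<forall>t \<in> (\<lambda>s. s + u) ` T.
              (\<Sum>\<^sub>\<infinity> x. \<bar>conv A B x - conv A B (x + t)\<bar> ^ 2)
                \<le> 32 * real (card A) ^ 2 * real (card B) / real k)"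
proof -
  note finA = assms(1) and finB = assms(3)
  let ?n = "real (card A)"
  define c where "c = 2 * real (Suc k) * ?n^2 * real (card B)"
  define G where "G = {a\<in>Ls A (Suc k). err A B a \<le> c}"
  define R where "R = {(a,b)\<in>G\<times>G. sh a = sh b}"
  define \<tau> :: "'a list \<times> 'a list \<Rightarrow> 'a" where "\<tau> = (\<lambda>(a,b). hd b - hd a)"
  define T where "T = \<tau> ` R"
  define D where "D = diffset A A"
  define E where "E = energy (2*k+2) A"
  have npos: "?n > 0" using assms by (simp add: card_gt_0_iff)
  have finG: "finite G" unfolding G_def using finite_Ls[OF finA] by simp
  have Gmem: "a \<noteq> [] \<and> set a \<subseteq> A \<and> length a = Suc k" if "a \<in> G" for a
    using that by (auto simp: G_def Ls_def)
  have Gcard: "real (card G) \<ge> ?n^(Suc k) / 2"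
    using markov[OF assms(1,3,2,4), of k] unfolding G_def c_def .
  have finR: "finite R"
  proof (rule finite_subset)
    show "R \<subseteq> G \<times> G" by (auto simp: R_def)
    show "finite (G \<times> G)" using finG by simp
  qed
  have finD: "finite D" unfolding D_def by (rule finite_diffset[OF finA])
  have RT: "\<tau> p \<in> D \<and> snd p = map (\<lambda>y. y + \<tau> p) (fst p)" if pR: "p \<in> R" for p
  proof -
    obtain a b where p: "p = (a, b)" "a \<in> G" "b \<in> G" "sh a = sh b"
      using pR by (auto simp: R_def)
    have "hd a \<in> A" "hd b \<in> A" using Gmem[OF p(2)] Gmem[OF p(3)] by (auto dest: hd_in_set)
    hence "\<tau> p \<in> D" unfolding D_def diffset_def \<tau>_def p by auto
    moreover have "b = map (\<lambda>y. y + (hd b - hd a)) a"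
      by (rule sh_eq_shift) (use p Gmem[OF p(2)] Gmem[OF p(3)] in auto)
    ultimately show ?thesis by (simp add: p \<tau>_def)
  qed
  have TD: "T \<subseteq> D" using RT by (auto simp: T_def)
  have finT: "finite T" using finR by (simp add: T_def)
  have per: "(\<Sum>\<^sub>\<infinity> x. \<bar>conv A B x - conv A B (x + t)\<bar> ^ 2) \<le> 32 * ?n ^ 2 * real (card B) / real k"
    if tT: "t \<in> T" for t
  proof -
    obtain p where p: "p \<in> R" "t = \<tau> p" using tT by (auto simp: T_def)
    obtain a b where ab: "p = (a, b)" "a \<in> G" "b \<in> G" using p(1) by (auto simp: R_def)
    have b: "b = map (\<lambda>y. y + t) a" using RT[OF p(1)] ab p by simp
    have "(\<Sum>\<^sub>\<infinity> x. \<bar>conv A B x - conv A B (x + t)\<bar> ^ 2) \<le> 4 * c / (real (Suc k))^2"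
      by (rule period[OF finA finB, where a=a])
         (use Gmem[OF ab(2)] Gmem[OF ab(3)] ab b in \<open>auto simp: G_def\<close>)
    also have "\<dots> = 8 * ?n^2 * real (card B) / real (Suc k)"
    proof -
      have gen: "\<And>x N::real. x > 0 \<Longrightarrow> 4 * (2 * x * N) / x^2 = 8 * N / x"
        by (simp add: power2_eq_square field_simps)
      show ?thesis unfolding c_def using gen[of "real (Suc k)" "?n^2 * real (card B)"]
        by (simp only: mult.assoc)
    qed
    also have "\<dots> \<le> 32 * ?n ^ 2 * real (card B) / real k"
    proof -
      have "8 * real k \<le> 32 * real (Suc k)" by simp
      moreover have "real k > 0" using assms(5) by simp
      ultimately show ?thesis
        by (simp add: field_simps mult_right_mono)
    qed
    finally show ?thesis .
  qed
  have shimg: "real (card (sh ` G)) \<le> real (card D)^k"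
  proof -
    have "sh ` G \<subseteq> (\<lambda>l. 0 # l) ` Ls D k"
    proof
      fix s assume "s \<in> sh ` G"
      then obtain a where a: "a \<in> G" "s = sh a" by auto
      then obtain y rest where yr: "a = y # rest" using Gmem[OF a(1)] by (cases a) auto
      have "y \<in> A" "set rest \<subseteq> A" "length rest = k" using Gmem[OF a(1)] yr by auto
      hence "map (\<lambda>z. z - y) rest \<in> Ls D k" unfolding Ls_def D_def diffset_def by auto
      moreover have "s = 0 # map (\<lambda>z. z - y) rest" using a yr by (simp add: sh_def)
      ultimately show "s \<in> (\<lambda>l. 0 # l) ` Ls D k" by blast
    qed
    hence "card (sh ` G) \<le> card ((\<lambda>l. 0 # l) ` Ls D k)"
      by (rule card_mono[rotated]) (simp add: finite_Ls finD)
    also have "\<dots> \<le> card (Ls D k)" by (rule card_image_le) (simp add: finite_Ls finD)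
    also have "\<dots> = card D ^ k" by (simp add: card_Ls finD)
    finally show ?thesis by (simp flip: of_nat_power)
  qed
  have cs1: "(real (card G))^2 \<le> real (card (sh ` G)) * real (card R)"
    unfolding R_def by (rule fiber_cs[OF finG])
  define cf where "cf t = real (card {p\<in>R. \<tau> p = t})" for t
  have cfb: "cf t \<le> corr A t ^ Suc k" for t
  proof -
    let ?At = "{y\<in>A. y + t \<in> A}"
    have "{p\<in>R. \<tau> p = t} \<subseteq> (\<lambda>a. (a, map (\<lambda>y. y + t) a)) ` Ls ?At (Suc k)"
    proof
      fix p assume p: "p \<in> {p\<in>R. \<tau> p = t}"
      obtain a b where ab: "p = (a, b)" "a \<in> G" "b \<in> G" using p by (auto simp: R_def)
      have b: "b = map (\<lambda>y. y + t) a" using RT[of p] p ab by simp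
      have "a \<in> Ls ?At (Suc k)" using Gmem[OF ab(2)] Gmem[OF ab(3)] b by (auto simp: Ls_def)
      thus "p \<in> (\<lambda>a. (a, map (\<lambda>y. y + t) a)) ` Ls ?At (Suc k)" using ab b by blast
    qed
    hence "card {p\<in>R. \<tau> p = t} \<le> card ((\<lambda>a. (a, map (\<lambda>y. y + t) a)) ` Ls ?At (Suc k))"
      by (rule card_mono[rotated]) (simp add: finite_Ls finA)
    also have "\<dots> \<le> card (Ls ?At (Suc k))" by (rule card_image_le) (simp add: finite_Ls finA)
    also have "\<dots> = card ?At ^ Suc k" by (simp add: card_Ls finA)
    finally have "card {p\<in>R. \<tau> p = t} \<le> card ?At ^ Suc k" .
    hence "real (card {p\<in>R. \<tau> p = t}) \<le> real (card ?At) ^ Suc k"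
      by (simp only: of_nat_power[symmetric] of_nat_le_iff)
    thus ?thesis unfolding cf_def corr_eq .
  qed
  have cs2: "(real (card R))^2 \<le> real (card T) * E"
  proof -
    have "real (card R) = (\<Sum>p\<in>R. 1)" by simp
    also have "\<dots> = (\<Sum>t\<in>T. \<Sum>p\<in>{x\<in>R. \<tau> x = t}. 1)"
      unfolding T_def by (rule sum.image_gen[OF finR])
    also have "\<dots> = (\<Sum>t\<in>T. cf t)" by (simp add: cf_def)
    finally have r: "real (card R) = (\<Sum>t\<in>T. cf t)" .
    have "(real (card R))^2 \<le> (\<Sum>t\<in>T. (cf t)^2) * real (card T)"
      unfolding r by (rule sum_squared_le_sum_of_squares)
    also have "(\<Sum>t\<in>T. (cf t)^2) \<le> (\<Sum>t\<in>T. corr A t ^ (2*k+2))"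
    proof (rule sum_mono)
      fix t
      have "(cf t)^2 \<le> (corr A t ^ Suc k)^2"
        by (rule power_mono[OF cfb]) (simp add: cf_def)
      moreover have "Suc k * 2 = 2*k+2" by simp
      hence "(corr A t ^ Suc k)^2 = corr A t ^ (2*k+2)" by (simp only: power_mult[symmetric])
      ultimately show "(cf t)^2 \<le> corr A t ^ (2*k+2)" by simp
    qed
    also have "\<dots> \<le> (\<Sum>t\<in>D. corr A t ^ (2*k+2))"
      by (rule sum_mono2[OF finD TD]) (simp add: corr_def)
    also have "\<dots> = E" unfolding E_def D_def by (rule energy_sum[symmetric, OF finA]) simp
    finally show ?thesis by (simp add: mult.commute mult_right_mono)
  qed
  have Kn: "real (card D) \<le> K * ?n" using assms(8) by (simp add: D_def)
  have Edef: "E = M * ?n ^ (2*k+3) / K ^ (2*k+1)" using assms(9) by (simp add: E_def)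
  have Epos: "E > 0" unfolding Edef using npos assms(6,7) by simp
  have idn: "(?n^(k+2)/(4*K^k))^2 = (K*?n/(16*M)) * E"
       "?n^(k+2)/(4*K^k) * (K*?n)^k = (?n^(Suc k)/2)^2"
    using arith_id[OF npos assms(6,7), of k] unfolding Edef by auto
  have "(?n^(Suc k)/2)^2 \<le> (real (card G))^2"
    by (rule power_mono[OF Gcard]) simp
  also have "\<dots> \<le> real (card (sh ` G)) * real (card R)" by (rule cs1)
  also have "\<dots> \<le> (K * ?n)^k * real (card R)"
  proof (rule mult_right_mono)
    show "real (card (sh ` G)) \<le> (K * ?n)^k"
      using shimg power_mono[OF Kn of_nat_0_le_iff, of k] by linarith
  qed simp
  finally have "?n^(k+2)/(4*K^k) * (K*?n)^k \<le> real (card R) * (K*?n)^k"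
    using idn(2) by (simp add: mult.commute)
  moreover have "(K*?n)^k > 0" using npos assms(6) by simp
  ultimately have r1: "?n^(k+2)/(4*K^k) \<le> real (card R)"
    by (rule mult_right_le_imp_le)
  have "(K*?n/(16*M)) * E = (?n^(k+2)/(4*K^k))^2" using idn(1) by simp
  also have "\<dots> \<le> (real (card R))^2"
    by (rule power_mono[OF r1]) (use npos assms(6) in simp)
  also have "\<dots> \<le> real (card T) * E" by (rule cs2)
  finally have "K*?n/(16*M) \<le> real (card T)" using Epos by (rule mult_right_le_imp_le)
  show ?thesis
  proof (intro exI[of _ T] exI[of _ 0] conjI)
    show "T \<subseteq> diffset A A" using TD by (simp add: D_def)
    show "K * ?n / (16 * M) \<le> real (card T)" by fact
    show "\<forall>t\<in>(\<lambda>s. s + 0) ` T. (\<Sum>\<^sub>\<infinity>x. \<bar>conv A B x - conv A B (x + t)\<bar> ^ 2)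
            \<le> 32 * ?n ^ 2 * real (card B) / real k"
      using per by simp
  qed
qed

end
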